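(* Let $L=Rd$ with $R,d$ positive integers and let $\Phi,\Psi$ be two unitary $L\times L$ matrices, partitioned into consecutive column-blocks $\Phi[\ell],\Psi[\ell]$ of size $L\times d$, $1\le\ell\le R$. Then $$\mu_{\mathrm B}(\Phi,\Psi)=\max_{\ell,r}\frac1d\rho(\Phi^H[\ell]\Psi[r])\ \ge\ \frac{1}{\sqrt{dL}}.$$
   Context: $\rho({\bf A})=\lambda_{\max}^{1/2}({\bf A}^H{\bf A})$ is the spectral norm. *)

theory Defs
  imports "Jordan_Normal_Form.Schur_Decomposition"
begin

definition unitary_mat :: "nat \<Rightarrow> complex mat \<Rightarrow> bool" where
  "unitary_mat n U \<longleftrightarrow> U \<in> carrier_mat n n \<and> mat_adjoint U * U = 1\<^sub>m n \<and> U * mat_adjoint U = 1\<^sub>m n"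

text \<open>Spectral norm rho(A) = sqrt of the largest eigenvalue of A^H A (these eigenvalues are real).\<close>
definition spectral_norm :: "complex mat \<Rightarrow> real" where
  "spectral_norm A = sqrt (Max (Re ` {k. eigenvalue (mat_adjoint A * A) k}))"

text \<open>Column block number l (0-based) of width d: columns l*d, ..., l*d + d - 1.\<close>
definition col_block :: "nat \<Rightarrow> complex mat \<Rightarrow> nat \<Rightarrow> complex mat" where
  "col_block d A l = mat (dim_row A) d (\<lambda>(i, j). A $$ (i, l * d + j))"

definition block_coherence :: "nat \<Rightarrow> nat \<Rightarrow> complex mat \<Rightarrow> complex mat \<Rightarrow> real" where
  "block_coherence R d Phi Psi =
     Max {spectral_norm (mat_adjoint (col_block d Phi l) * col_block d Psi r) / real d | l r. l < R \<and> r < R}"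

end

theory Submission
  imports Defs
begin

lemma adj_dims[simp]: "dim_row (mat_adjoint A) = dim_col A" "dim_col (mat_adjoint A) = dim_row A"
  unfolding mat_adjoint_def by auto

lemma adj_index[simp]: "i < dim_col A \<Longrightarrow> j < dim_row A \<Longrightarrow> mat_adjoint A $$ (i,j) = conjugate (A $$ (j,i))"
  unfolding mat_adjoint_def by (simp add: mat_of_rows_index)

lemma regroup: "(\<Sum>i<R*d. g i) = (\<Sum>l<R. \<Sum>a<d. g (l*d+a :: nat))"
proof -
  have "(\<Sum>i<R*d. g i) = (\<Sum>l<R. sum g {l*d..<l*d+d})" by (rule sum.nat_group[symmetric])
  also have "\<dots> = (\<Sum>l<R. \<Sum>a<d. g (l*d+a))"
    proof (rule sum.cong[OF refl])
    fix l assume "l \<in> {..<R}" show "sum g {l*d..<l*d+d} = (\<Sum>a<d. g (l*d+a))"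
      using sum.shift_bounds_nat_ivl[of g 0 "l*d" d] by (simp add: atLeast0LessThan add.commute)
  qed
  finally show ?thesis .
qed

lemma adj_mult_diag:
  assumes M: "M \<in> carrier_mat n m" and j: "j < m"
  shows "(mat_adjoint M * M) $$ (j,j) = of_real (\<Sum>i<n. (cmod (M $$ (i,j)))^2)"
proof -
  have "(mat_adjoint M * M) $$ (j,j) = (\<Sum>i<n. M $$ (i,j) * cnj (M $$ (i,j)))"
    using M j by (simp add: scalar_prod_def lessThan_atLeast0 mult.commute)
  also have "\<dots> = (\<Sum>i<n. of_real ((cmod (M $$ (i,j)))^2))"
    by (rule sum.cong[OF refl]) (simp only: complex_norm_square)
  also have "\<dots> = of_real (\<Sum>i<n. (cmod (M $$ (i,j)))^2)" by simp
  finally show ?thesis .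
qed


definition tr :: "complex mat \<Rightarrow> complex" where "tr A = (\<Sum>i<dim_row A. A $$ (i,i))"

lemma tr_comm: assumes A: "A \<in> carrier_mat n m" and B: "B \<in> carrier_mat m n"
  shows "tr (A * B) = tr (B * A)"
proof -
  have "tr (A * B) = (\<Sum>i<n. \<Sum>k<m. A $$ (i,k) * B $$ (k,i))"
    using A B by (simp add: tr_def scalar_prod_def lessThan_atLeast0)
  also have "\<dots> = (\<Sum>k<m. \<Sum>i<n. B $$ (k,i) * A $$ (i,k))"
    by (subst sum.swap) (simp add: mult.commute)
  also have "\<dots> = tr (B * A)"
    using A B by (simp add: tr_def scalar_prod_def lessThan_atLeast0)
  finally show ?thesis .
qed

lemma tr_similar: assumes "similar_mat_wit A B P Q" shows "tr A = tr B"
proof -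
  let ?n = "dim_row A"
  have c: "A \<in> carrier_mat ?n ?n" "B \<in> carrier_mat ?n ?n" "P \<in> carrier_mat ?n ?n" "Q \<in> carrier_mat ?n ?n"
   and QP: "Q * P = 1\<^sub>m ?n" and AB: "A = P * B * Q"
    using assms unfolding similar_mat_wit_def Let_def by blast+
  have e1: "P * B * Q = P * (B * Q)" by (rule assoc_mult_mat[OF c(3) c(2) c(4)])
  have e2: "(B * Q) * P = B * (Q * P)" by (rule assoc_mult_mat[OF c(2) c(4) c(3)])
  have "tr A = tr (P * (B * Q))" using AB e1 by simp
  also have "\<dots> = tr ((B * Q) * P)" by (rule tr_comm[OF c(3) mult_carrier_mat[OF c(2) c(4)]])
  also have "\<dots> = tr (B * (Q * P))" using e2 by simp
  also have "\<dots> = tr B" using c(2) QP by simp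
  finally show ?thesis .
qed

lemma eig_bound:
  assumes M: "M \<in> carrier_mat d d" and d: "d > 0"
  shows "sqrt ((\<Sum>i<d. \<Sum>j<d. (cmod (M $$ (i,j)))^2) / d) \<le> spectral_norm M"
proof -
  define A where "A = mat_adjoint M * M"
  have A: "A \<in> carrier_mat d d" using M unfolding A_def by auto
  have trA: "tr A = of_real (\<Sum>i<d. \<Sum>j<d. (cmod (M $$ (i,j)))^2)"
  proof -
    have "tr A = (\<Sum>j<d. A $$ (j,j))" using A by (simp add: tr_def)
    also have "\<dots> = (\<Sum>j<d. of_real (\<Sum>i<d. (cmod (M $$ (i,j)))^2))"
    proof (rule sum.cong[OF refl])
      fix j assume "j \<in> {..<d}"
      then show "A $$ (j,j) = of_real (\<Sum>i<d. (cmod (M $$ (i,j)))^2)"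
        unfolding A_def by (intro adj_mult_diag[OF M]) simp
    qed
    also have "\<dots> = of_real (\<Sum>i<d. \<Sum>j<d. (cmod (M $$ (i,j)))^2)"
      by (subst sum.swap) simp
    finally show ?thesis .
  qed
  obtain es where es: "char_poly A = (\<Prod>a\<leftarrow>es. [:- a, 1:])" "length es = d"
    using char_poly_factorized[OF A] by blast
  obtain B P Q where sch: "schur_decomposition A es = (B,P,Q)" by (cases "schur_decomposition A es") auto
  from schur_decomposition[OF A es(1) sch]
  have sim: "similar_mat_wit A B P Q" and dg: "diag_mat B = es" by blast+
  have Bc: "B \<in> carrier_mat d d" using similar_mat_witD2[OF A sim] by auto
  have eig: "eigenvalue A (B $$ (i,i))" if "i < d" for i
  proof -
    have "B $$ (i,i) \<in> set es" using dg Bc that unfolding diag_mat_def by auto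
    hence "poly (char_poly A) (B $$ (i,i)) = 0"
      unfolding es(1) by (auto simp: poly_prod_list prod_list_zero_iff)
    thus ?thesis using eigenvalue_root_char_poly[OF A] by simp
  qed
  have trB: "tr B = (\<Sum>i<d. B $$ (i,i))" using Bc by (simp add: tr_def)
  have "Max ((\<lambda>i. Re (B $$ (i,i))) ` {..<d}) \<in> (\<lambda>i. Re (B $$ (i,i))) ` {..<d}"
    using d by (intro Max_in) auto
  then obtain i0 where i0: "i0 < d" and i0m: "Re (B $$ (i0,i0)) = Max ((\<lambda>i. Re (B $$ (i,i))) ` {..<d})"
    by auto
  have imax: "Re (B $$ (i,i)) \<le> Re (B $$ (i0,i0))" if "i < d" for i
    unfolding i0m using that by (intro Max_ge) auto
  have "(\<Sum>i<d. \<Sum>j<d. (cmod (M $$ (i,j)))^2) = Re (tr A)" using trA by simp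
  also have "\<dots> = (\<Sum>i<d. Re (B $$ (i,i)))" using tr_similar[OF sim] trB by (simp add: Re_sum)
  also have "\<dots> \<le> (\<Sum>i<d. Re (B $$ (i0,i0)))" by (rule sum_mono) (use imax in auto)
  also have "\<dots> = d * Re (B $$ (i0,i0))" by simp
  finally have le1: "(\<Sum>i<d. \<Sum>j<d. (cmod (M $$ (i,j)))^2) / d \<le> Re (B $$ (i0,i0))"
    using d by (simp add: divide_le_eq mult.commute)
  have fin: "finite {k. eigenvalue A k}"
  proof -
    have "char_poly A \<noteq> 0" using degree_monic_char_poly[OF A] by auto
    from poly_roots_finite[OF this] show ?thesis using eigenvalue_root_char_poly[OF A] by simp
  qed
  have "Re (B $$ (i0,i0)) \<le> Max (Re ` {k. eigenvalue A k})"
    using fin eig[OF i0] by (intro Max_ge) auto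
  with le1 have "(\<Sum>i<d. \<Sum>j<d. (cmod (M $$ (i,j)))^2) / d \<le> Max (Re ` {k. eigenvalue A k})" by linarith
  thus ?thesis unfolding spectral_norm_def A_def[symmetric] by (rule real_sqrt_le_mono)
qed


lemma adj_mult: fixes A B :: "complex mat" assumes A: "A \<in> carrier_mat n m" and B: "B \<in> carrier_mat m k"
  shows "mat_adjoint (A * B) = mat_adjoint B * mat_adjoint A"
proof (rule eq_matI)
  fix i j assume i: "i < dim_row (mat_adjoint B * mat_adjoint A)" and j: "j < dim_col (mat_adjoint B * mat_adjoint A)"
  hence i': "i < k" and j': "j < n" using A B by auto
  have "mat_adjoint (A * B) $$ (i,j) = cnj (\<Sum>l<m. A $$ (j,l) * B $$ (l,i))"
    using A B i' j' by (simp add: scalar_prod_def lessThan_atLeast0)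
  also have "\<dots> = (\<Sum>l<m. cnj (B $$ (l,i)) * cnj (A $$ (j,l)))"
    by (simp add: mult.commute)
  also have "\<dots> = (mat_adjoint B * mat_adjoint A) $$ (i,j)"
    using A B i' j' by (simp add: scalar_prod_def lessThan_atLeast0)
  finally show "mat_adjoint (A * B) $$ (i,j) = (mat_adjoint B * mat_adjoint A) $$ (i,j)" .
qed (use A B in auto)

lemma idx_bound: assumes "l < (R::nat)" "a < d" shows "l * d + a < R * d"
proof -
  have "l * d + a < l * d + d" using assms by simp
  also have "\<dots> = Suc l * d" by simp
  also have "\<dots> \<le> R * d" using assms by (intro mult_le_mono1) simp
  finally show ?thesis .
qed

theorem proposition4:
  fixes R d L :: nat and Phi Psi :: "complex mat"
  assumes "R > 0" and "d > 0" and "L = R * d"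
    and "unitary_mat L Phi" and "unitary_mat L Psi"
  shows "block_coherence R d Phi Psi \<ge> 1 / sqrt (real d * real L)"
proof -
  note R = assms(1) and d = assms(2) and L = assms(3)
  have Phi: "Phi \<in> carrier_mat L L" and PhiH: "Phi * mat_adjoint Phi = 1\<^sub>m L"
    using assms(4) unfolding unitary_mat_def by auto
  have Psi: "Psi \<in> carrier_mat L L" and PsiH: "mat_adjoint Psi * Psi = 1\<^sub>m L"
    using assms(5) unfolding unitary_mat_def by auto
  have aPhi: "mat_adjoint Phi \<in> carrier_mat L L" and aPsi: "mat_adjoint Psi \<in> carrier_mat L L"
    using Phi Psi by auto
  define U where "U = mat_adjoint Phi * Psi"
  have U: "U \<in> carrier_mat L L" using aPhi Psi unfolding U_def by auto
  have "mat_adjoint U = mat_adjoint Psi * mat_adjoint (mat_adjoint Phi)"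
    unfolding U_def by (rule adj_mult[OF aPhi Psi])
  also have "mat_adjoint (mat_adjoint Phi) = Phi"
    using Phi by (intro eq_matI) auto
  finally have aU: "mat_adjoint U = mat_adjoint Psi * Phi" .
  have UU: "mat_adjoint U * U = 1\<^sub>m L"
  proof -
    have "mat_adjoint U * U = mat_adjoint Psi * Phi * (mat_adjoint Phi * Psi)" unfolding aU by (simp only: U_def)
    also have "\<dots> = mat_adjoint Psi * (Phi * (mat_adjoint Phi * Psi))"
      by (rule assoc_mult_mat[OF aPsi Phi mult_carrier_mat[OF aPhi Psi]])
    also have "Phi * (mat_adjoint Phi * Psi) = (Phi * mat_adjoint Phi) * Psi"
      by (rule assoc_mult_mat[OF Phi aPhi Psi, symmetric])
    also have "\<dots> = Psi" unfolding PhiH using Psi by simp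
    finally show ?thesis using PsiH by simp
  qed
  define f where "f i j = (cmod (U $$ (i,j)))^2" for i j
  have col1: "(\<Sum>i<L. f i j) = 1" if "j < L" for j
  proof -
    have "of_real (\<Sum>i<L. f i j) = (1::complex)"
      using adj_mult_diag[OF U that] UU that unfolding f_def by simp
    thus ?thesis by (metis of_real_eq_1_iff)
  qed
  have totL: "(\<Sum>i<L. \<Sum>j<L. f i j) = real L"
    by (subst sum.swap) (simp add: col1)
  define M where "M l r = mat_adjoint (col_block d Phi l) * col_block d Psi r" for l r
  have Mc: "M l r \<in> carrier_mat d d" for l r
    using Phi Psi unfolding M_def col_block_def by auto
  have Mi: "M l r $$ (a,b) = U $$ (l*d+a, r*d+b)" if "l < R" "r < R" "a < d" "b < d" for l r a b
  proof -
    have "l*d+a < L" "r*d+b < L" using idx_bound that L by auto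
    thus ?thesis using that Phi Psi unfolding M_def U_def col_block_def
      by (simp add: scalar_prod_def)
  qed
  define F where "F l r = (\<Sum>a<d. \<Sum>b<d. (cmod (M l r $$ (a,b)))^2)" for l r
  have FF: "F l r = (\<Sum>a<d. \<Sum>b<d. f (l*d+a) (r*d+b))" if "l < R" "r < R" for l r
    unfolding F_def f_def using that by (intro sum.cong refl) (simp add: Mi)
  have sumF: "(\<Sum>l<R. \<Sum>r<R. F l r) = real L"
  proof -
    have "real L = (\<Sum>i<R*d. \<Sum>j<R*d. f i j)" using totL L by simp
    also have "\<dots> = (\<Sum>l<R. \<Sum>a<d. \<Sum>r<R. \<Sum>b<d. f (l*d+a) (r*d+b))"
      by (simp add: regroup)
    also have "\<dots> = (\<Sum>l<R. \<Sum>r<R. \<Sum>a<d. \<Sum>b<d. f (l*d+a) (r*d+b))"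
      by (rule sum.cong[OF refl], rule sum.swap)
    also have "\<dots> = (\<Sum>l<R. \<Sum>r<R. F l r)"
      by (intro sum.cong refl) (simp add: FF)
    finally show ?thesis by simp
  qed
  obtain l0 r0 where lr: "l0 < R" "r0 < R" and Fbig: "F l0 r0 \<ge> real d / real R"
  proof (rule ccontr)
    assume "\<not> thesis"
    with that have lt: "F l r < real d / real R" if "l < R" "r < R" for l r
      using that by force
    have "(\<Sum>l<R. \<Sum>r<R. F l r) < (\<Sum>l<R. \<Sum>r<R. real d / real R)"
      using R by (intro sum_strict_mono) (auto intro!: sum_strict_mono lt)
    also have "\<dots> = real L" using R L by simp
    finally show False using sumF by simp
  qed
  have "sqrt (F l0 r0 / d) \<le> spectral_norm (M l0 r0)"
    unfolding F_def by (rule eig_bound[OF Mc d])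
  moreover have "sqrt (1 / real R) \<le> sqrt (F l0 r0 / d)"
    using Fbig d R by (intro real_sqrt_le_mono) (simp add: field_simps)
  ultimately have sn: "1 / sqrt (real R) \<le> spectral_norm (M l0 r0)"
    by (simp add: real_sqrt_divide)
  have fin: "finite {spectral_norm (mat_adjoint (col_block d Phi l) * col_block d Psi r) / real d | l r. l < R \<and> r < R}"
    by (rule finite_image_set2) auto
  have "spectral_norm (M l0 r0) / real d \<le> block_coherence R d Phi Psi"
    unfolding block_coherence_def M_def using lr by (intro Max_ge[OF fin]) blast
  moreover have "1 / sqrt (real d * real L) = (1 / sqrt (real R)) / real d"
    using d R L by (simp add: real_sqrt_mult field_simps)
  moreover have "(1 / sqrt (real R)) / real d \<le> spectral_norm (M l0 r0) / real d"
    using sn d by (intro divide_right_mono) auto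
  ultimately show ?thesis by linarith
qed

end
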